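(* Let $S$ be a closed, densely defined symmetric operator in a Hilbert space $\mathfrak{H}$ with equal deficiency indices, and let $J$ be a fundamental symmetry in $\mathfrak{H}$ commuting with $S$. Then there exists a unitary mapping $Q:\mathfrak{N}_{i}\to\mathfrak{N}_{-i}$ for which the boundary operators $\Gamma_0,\Gamma_1$ defined below satisfy $\Gamma_0 J=J\Gamma_0$ and $\Gamma_1 J=J\Gamma_1$ on $\mathcal{D}(S^* )$ if and only if there exists at least one self-adjoint extension of $S$ commuting with $J$.
   Context: A fundamental symmetry is a bounded operator $J$ with $J=J^*$, $J^2=I$. "$J$ commutes with an operator $T$" means $J\mathcal{D}(T)\subset\mathcal{D}(T)$ and $JTu=TJu$ for $u\in\mathcal{D}(T)$. Defect subspaces: $\mathfrak{N}_i=\mathfrak{H}\ominus\mathcal{R}(S-iI)$, $\mathfrak{N}_{-i}=\mathfrak{H}\ominus\mathcal{R}(S+iI)$; since $SJ=JS$, these subspaces are invariant under $J$. By von Neumann's formula every $\psi\in\mathcal{D}(S^* )$ decomposes uniquely as $\psi=u+f_{-i}+f_i$ with $u\in\mathcal{D}(S)$, $f_{\pm i}\in\mathfrak{N}_{\pm i}$. For a unitary $Q:\mathfrak{N}_i\to\mathfrak{N}_{-i}$ define $\Gamma_0,\Gamma_1:\mathcal{D}(S^* )\to\mathfrak{N}_{-i}$ by $\Gamma_0\psi=f_{-i}+Qf_i$, $\Gamma_1\psi=if_{-i}-iQf_i$ (the triplet $(\mathfrak{N}_{-i},\Gamma_0,\Gamma_1)$ is then a boundary triplet of $S^*$). *)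

theory Defs
  imports "HOL-Analysis.Analysis" "HOL-Library.Equipollence"
begin

text \<open>A complex Hilbert space is modelled as a real Hilbert space (real inner product,
complete) equipped with a multiplication by the imaginary unit, ii, which is a
real-linear isometry squaring to minus the identity. Complex scalar multiplication
and the complex inner product (linear in the first argument) are derived from it.\<close>

class complex_hilbert = real_inner + complete_space +
  fixes ii :: "'a \<Rightarrow> 'a"
  assumes ii_add: "ii (x + y) = ii x + ii y"
    and ii_scaleR: "ii (r *\<^sub>R x) = r *\<^sub>R ii x"
    and ii_ii: "ii (ii x) = - x"
    and inner_ii_ii: "inner (ii x) (ii y) = inner x y"

definition scaleC :: "complex \<Rightarrow> 'a::complex_hilbert \<Rightarrow> 'a" where
  "scaleC z x = Re z *\<^sub>R x + Im z *\<^sub>R ii x"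

definition cinner :: "'a::complex_hilbert \<Rightarrow> 'a \<Rightarrow> complex" where
  "cinner x y = Complex (inner x y) (inner x (ii y))"

definition orth_compl :: "'a::complex_hilbert set \<Rightarrow> 'a set" where
  "orth_compl M = {x. \<forall>y\<in>M. cinner y x = 0}"

definition cspan :: "'a::complex_hilbert set \<Rightarrow> 'a set" where
  "cspan B = {\<Sum>b\<in>F. scaleC (c b) b | F c. finite F \<and> F \<subseteq> B}"

definition orthonormal_basis :: "'a::complex_hilbert set \<Rightarrow> 'a set \<Rightarrow> bool" where
  "orthonormal_basis M B \<longleftrightarrow> B \<subseteq> M \<and> (\<forall>b\<in>B. cinner b b = 1)
     \<and> (\<forall>b\<in>B. \<forall>c\<in>B. b \<noteq> c \<longrightarrow> cinner b c = 0) \<and> closure (cspan B) = M"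

definition equal_hilbert_dim :: "'a::complex_hilbert set \<Rightarrow> 'a set \<Rightarrow> bool" where
  "equal_hilbert_dim M N \<longleftrightarrow>
     (\<exists>B C. orthonormal_basis M B \<and> orthonormal_basis N C \<and> B \<approx> C)"

definition is_operator :: "('a::complex_hilbert \<times> 'a) set \<Rightarrow> bool" where
  "is_operator G \<longleftrightarrow> (0, 0) \<in> G
     \<and> (\<forall>(u, v)\<in>G. \<forall>(u', v')\<in>G. (u + u', v + v') \<in> G)
     \<and> (\<forall>(u, v)\<in>G. \<forall>c. (scaleC c u, scaleC c v) \<in> G)
     \<and> (\<forall>u v w. (u, v) \<in> G \<and> (u, w) \<in> G \<longrightarrow> v = w)"

definition densely_defined :: "('a::complex_hilbert \<times> 'a) set \<Rightarrow> bool" where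
  "densely_defined G \<longleftrightarrow> closure (Domain G) = UNIV"

definition adjoint_op :: "('a::complex_hilbert \<times> 'a) set \<Rightarrow> ('a \<times> 'a) set" where
  "adjoint_op G = {(y, z). \<forall>(x, w)\<in>G. cinner w y = cinner x z}"

definition symmetric_op :: "('a::complex_hilbert \<times> 'a) set \<Rightarrow> bool" where
  "symmetric_op G \<longleftrightarrow> is_operator G \<and> densely_defined G \<and> G \<subseteq> adjoint_op G"

definition self_adjoint_op :: "('a::complex_hilbert \<times> 'a) set \<Rightarrow> bool" where
  "self_adjoint_op A \<longleftrightarrow> is_operator A \<and> densely_defined A \<and> A = adjoint_op A"

definition range_shift :: "('a::complex_hilbert \<times> 'a) set \<Rightarrow> complex \<Rightarrow> 'a set" where
  "range_shift G c = {v - scaleC c u | u v. (u, v) \<in> G}"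

text \<open>Defect subspace: defect S c = H \<ominus> R(S - c I); so N_i = defect S i, N_{-i} = defect S (-i).\<close>
definition defect :: "('a::complex_hilbert \<times> 'a) set \<Rightarrow> complex \<Rightarrow> 'a set" where
  "defect G c = orth_compl (range_shift G c)"

definition fundamental_symmetry :: "('a::complex_hilbert \<Rightarrow> 'a) \<Rightarrow> bool" where
  "fundamental_symmetry J \<longleftrightarrow> bounded_linear J \<and> (\<forall>x. J (ii x) = ii (J x))
     \<and> (\<forall>x y. cinner (J x) y = cinner x (J y)) \<and> (\<forall>x. J (J x) = x)"

text \<open>J commutes with T: J D(T) \<subseteq> D(T) and J T u = T J u, i.e. J \<times> J maps the graph into itself.\<close>
definition commutes_with :: "('a::complex_hilbert \<Rightarrow> 'a) \<Rightarrow> ('a \<times> 'a) set \<Rightarrow> bool" where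
  "commutes_with J G \<longleftrightarrow> (\<forall>(u, v)\<in>G. (J u, J v) \<in> G)"

definition unitary_between :: "('a::complex_hilbert \<Rightarrow> 'a) \<Rightarrow> 'a set \<Rightarrow> 'a set \<Rightarrow> bool" where
  "unitary_between Q M N \<longleftrightarrow> Q ` M = N
     \<and> (\<forall>x\<in>M. \<forall>y\<in>M. \<forall>a b. Q (scaleC a x + scaleC b y) = scaleC a (Q x) + scaleC b (Q y))
     \<and> (\<forall>x\<in>M. \<forall>y\<in>M. cinner (Q x) (Q y) = cinner x y)"

definition vn_parts :: "('a::complex_hilbert \<times> 'a) set \<Rightarrow> 'a \<Rightarrow> 'a \<times> 'a \<times> 'a" where
  "vn_parts S \<psi> = (THE (u, fm, fp). u \<in> Domain S \<and> fm \<in> defect S (- \<i>)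
       \<and> fp \<in> defect S \<i> \<and> \<psi> = u + fm + fp)"

definition Gamma0 :: "('a::complex_hilbert \<times> 'a) set \<Rightarrow> ('a \<Rightarrow> 'a) \<Rightarrow> 'a \<Rightarrow> 'a" where
  "Gamma0 S Q \<psi> = (case vn_parts S \<psi> of (u, fm, fp) \<Rightarrow> fm + Q fp)"

definition Gamma1 :: "('a::complex_hilbert \<times> 'a) set \<Rightarrow> ('a \<Rightarrow> 'a) \<Rightarrow> 'a \<Rightarrow> 'a" where
  "Gamma1 S Q \<psi> = (case vn_parts S \<psi> of (u, fm, fp) \<Rightarrow> scaleC \<i> fm - scaleC \<i> (Q fp))"

end

theory Submission
  imports Defs
begin


lemma ii_zero[simp]: "ii (0::'a::complex_hilbert) = 0"
  by (metis add_cancel_right_right ii_add)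
lemma ii_minus[simp]: "ii (- x) = - ii (x::'a::complex_hilbert)"
  by (metis add.right_inverse add_eq_0_iff ii_add ii_zero)
lemma ii_diff: "ii (x - y) = ii x - ii (y::'a::complex_hilbert)"
  by (metis diff_conv_add_uminus ii_add ii_minus)
lemma inner_ii_left: "inner (ii x) y = - inner x (ii (y::'a::complex_hilbert))"
  by (metis ii_ii inner_ii_ii inner_minus_left)
lemma inner_ii_self[simp]: "inner (ii x) (x::'a::complex_hilbert) = 0"
  by (metis add.inverse_neutral inner_commute inner_ii_left neg_equal_zero)
lemma inner_ii_self'[simp]: "inner x (ii (x::'a::complex_hilbert)) = 0"
  by (metis inner_commute inner_ii_self)
lemma norm_ii[simp]: "norm (ii (x::'a::complex_hilbert)) = norm x"
  by (simp add: norm_eq_sqrt_inner inner_ii_ii)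
lemma ii_eq_0_iff[simp]: "ii (x::'a::complex_hilbert) = 0 \<longleftrightarrow> x = 0"
  by (metis norm_ii norm_eq_zero)
lemma ii_inj: "ii (x::'a::complex_hilbert) = ii y \<longleftrightarrow> x = y"
  by (metis eq_iff_diff_eq_0 ii_diff ii_eq_0_iff)
lemma bl_ii: "bounded_linear (ii :: 'a::complex_hilbert \<Rightarrow> 'a)"
  by (rule bounded_linear_intro[where K=1]) (auto simp: ii_add ii_scaleR)
lemma ii_sum: "ii (sum f A) = (\<Sum>a\<in>A. ii (f a :: 'a::complex_hilbert))"
  using linear_sum[OF bounded_linear.linear[OF bl_ii]] by blast

lemma scaleC_ii: "scaleC \<i> x = ii x" by (simp add: scaleC_def)
lemma scaleC_mii: "scaleC (- \<i>) x = - ii x" by (simp add: scaleC_def)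
lemma scaleC_add_right: "scaleC a (x + y) = scaleC a x + scaleC a (y::'a::complex_hilbert)"
  by (simp add: scaleC_def ii_add scaleR_add_right)
lemma scaleC_add_left: "scaleC (a + b) x = scaleC a x + scaleC b (x::'a::complex_hilbert)"
  by (simp add: scaleC_def scaleR_add_left)
lemma ii_scaleC: "ii (scaleC a x) = scaleC a (ii (x::'a::complex_hilbert))"
  by (simp add: scaleC_def ii_add ii_scaleR ii_ii)
lemma scaleC_scaleC: "scaleC a (scaleC b x) = scaleC (a*b) (x::'a::complex_hilbert)"
  by (simp add: scaleC_def ii_add ii_scaleR ii_ii scaleR_add_right scaleR_add_left algebra_simps)
lemma scaleC_zero[simp]: "scaleC a (0::'a::complex_hilbert) = 0"
  by (simp add: scaleC_def)
lemma scaleC_0[simp]: "scaleC 0 (x::'a::complex_hilbert) = 0"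
  by (simp add: scaleC_def)

lemma cinner_zero_iff: "cinner x y = 0 \<longleftrightarrow> inner x y = 0 \<and> inner x (ii y) = 0"
  by (simp add: cinner_def complex_eq_iff)

lemma inner_real_scaleC_left: "inner (scaleC c x) y = Re c * inner x y - Im c * inner x (ii (y::'a::complex_hilbert))"
  by (simp add: scaleC_def inner_add_left inner_ii_left)


lemma parallelogram_aux:
  fixes x a b :: "'a::real_inner"
  shows "norm (a - b)^2 + norm ((x - a) + (x - b))^2 = 2 * norm (x - a)^2 + 2 * norm (x - b)^2"
proof -
  have "a - b = (x - b) - (x - a)" by simp
  then have "norm (a - b)^2 = norm ((x - b) - (x - a))^2" by simp
  then show ?thesis
    by (simp only: power2_norm_eq_inner inner_add_left inner_add_right inner_diff_left inner_diff_right inner_commute) (simp add: algebra_simps inner_commute)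
qed

lemma infdist_approx:
  fixes M :: "'a::metric_space set"
  assumes "M \<noteq> {}" "e > 0"
  shows "\<exists>a\<in>M. dist x a < infdist x M + e"
proof (rule ccontr)
  assume "\<not> ?thesis"
  then have "\<forall>a\<in>M. infdist x M + e \<le> dist x a" by force
  then have "infdist x M + e \<le> infdist x M"
    unfolding infdist_notempty[OF assms(1)] by (intro cINF_greatest[OF assms(1)]) auto
  with assms show False by simp
qed

lemma projection_exists:
  fixes M :: "'a::{real_inner, complete_space} set"
  assumes cl: "closed M" and z: "0 \<in> M" and add: "\<And>x y. x \<in> M \<Longrightarrow> y \<in> M \<Longrightarrow> x + y \<in> M"
    and sc: "\<And>x r. x \<in> M \<Longrightarrow> r *\<^sub>R x \<in> M"
  shows "\<exists>m\<in>M. \<forall>y\<in>M. inner (x - m) y = 0"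
proof -
  define d where "d = infdist x M"
  have Mne: "M \<noteq> {}" using z by auto
  have d0: "0 \<le> d" unfolding d_def by (rule infdist_nonneg)
  have "\<forall>n. \<exists>a\<in>M. dist x a < d + inverse (real (Suc n))"
    using infdist_approx[OF Mne] d_def by simp
  then obtain m where mM: "\<And>n. m n \<in> M" and md: "\<And>n. dist x (m n) < d + inverse (real (Suc n))"
    by metis
  have dle: "d \<le> dist x a" if "a \<in> M" for a unfolding d_def using that by (rule infdist_le)
  have key: "norm (m p - m q)^2 \<le> 2*(2*d+1)*(inverse (real (Suc p)) + inverse (real (Suc q)))" for p q
  proof -
    define ep where "ep = inverse (real (Suc p))"
    define eq where "eq = inverse (real (Suc q))"
    have ep: "0 < ep" "ep \<le> 1" unfolding ep_def by (auto simp: field_simps)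
    have eq: "0 < eq" "eq \<le> 1" unfolding eq_def by (auto simp: field_simps)
    have mid: "inverse 2 *\<^sub>R (m p + m q) \<in> M" using add[OF mM mM] sc by blast
    have "d \<le> norm (x - inverse 2 *\<^sub>R (m p + m q))" using dle[OF mid] by (simp add: dist_norm)
    moreover have "(x - m p) + (x - m q) = 2 *\<^sub>R (x - inverse 2 *\<^sub>R (m p + m q))"
      by (simp add: algebra_simps scaleR_2)
    ultimately have "2 * d \<le> norm ((x - m p) + (x - m q))" by simp
    then have A: "4 * d^2 \<le> norm ((x - m p) + (x - m q))^2"
      proof -
      have "(2*d)^2 \<le> norm ((x - m p) + (x - m q))^2" using \<open>2 * d \<le> _\<close> d0 by (intro power_mono) auto
      then show ?thesis by (simp add: power_mult_distrib)
    qed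
    have B: "norm (x - m p) < d + ep" using md[of p] ep_def by (simp add: dist_norm)
    have C: "norm (x - m q) < d + eq" using md[of q] eq_def by (simp add: dist_norm)
    have B2: "norm (x - m p)^2 \<le> (d + ep)^2" using B by (intro power_mono) auto
    have C2: "norm (x - m q)^2 \<le> (d + eq)^2" using C by (intro power_mono) auto
    have "norm (m p - m q)^2 \<le> 2*(d+ep)^2 + 2*(d+eq)^2 - 4*d^2"
      using parallelogram_aux[of "m p" "m q" x] A B2 C2 by linarith
    also have "\<dots> = 2*(2*d*ep + ep*ep) + 2*(2*d*eq+eq*eq)" by (simp add: power2_eq_square algebra_simps)
    also have "\<dots> \<le> 2*(2*d*ep + ep) + 2*(2*d*eq+eq)"
      using ep eq d0 by (intro add_mono mult_left_mono) (auto simp: mult_le_cancel_left1)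
    also have "\<dots> = 2*(2*d+1)*(ep + eq)" by (simp add: algebra_simps)
    finally show ?thesis unfolding ep_def eq_def .
  qed
  have "Cauchy m"
  proof (rule CauchyI)
    fix e :: real assume e: "0 < e"
    obtain N where N: "inverse (real (Suc N)) < e^2 / (4*(2*d+1))"
      using reals_Archimedean[of "e^2 / (4*(2*d+1))"] e d0 by auto
    show "\<exists>N. \<forall>p\<ge>N. \<forall>q\<ge>N. norm (m p - m q) < e"
    proof (intro exI allI impI)
      fix p q assume "N \<le> p" "N \<le> q"
      then have ip: "inverse (real (Suc p)) \<le> inverse (real (Suc N))" "inverse (real (Suc q)) \<le> inverse (real (Suc N))"
        by (auto simp: field_simps)
      have "norm (m p - m q)^2 \<le> 2*(2*d+1)*(2*inverse (real (Suc N)))"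
        using key[of p q] ip d0 by (smt (verit) mult_left_mono)
      also have "\<dots> < 2*(2*d+1)*(2*(e^2 / (4*(2*d+1))))"
        using N d0 by (intro mult_strict_left_mono) auto
      also have "\<dots> = e^2" using d0 by (simp add: field_simps)
      finally show "norm (m p - m q) < e" using e by (simp add: power_less_imp_less_base)
    qed
  qed
  then obtain m0 where lim: "m \<longlonglongrightarrow> m0" using Cauchy_convergent_iff convergent_def by blast
  have m0M: "m0 \<in> M" using closed_sequentially[OF cl mM lim] .
  have "(\<lambda>n. dist x (m n)) \<longlonglongrightarrow> dist x m0" by (intro tendsto_intros lim)
  moreover have "(\<lambda>n. d + inverse (real (Suc n))) \<longlonglongrightarrow> d + 0"
    by (intro tendsto_intros LIMSEQ_inverse_real_of_nat)
  ultimately have "dist x m0 \<le> d" using md by (intro LIMSEQ_le[where X="\<lambda>n. dist x (m n)"]) (auto intro: less_imp_le)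
  then have nz: "norm (x - m0) = d" using dle[OF m0M] by (simp add: dist_norm)
  show ?thesis
  proof (intro bexI[OF _ m0M] ballI)
    fix y assume yM: "y \<in> M"
    define zz where "zz = x - m0"
    define c where "c = inner zz y"
    define Y where "Y = norm y ^2"
    define t where "t = c / (Y + 1)"
    have Y0: "0 \<le> Y" unfolding Y_def by simp
    have "m0 + t *\<^sub>R y \<in> M" using add[OF m0M sc[OF yM]] .
    then have "d \<le> norm (zz - t *\<^sub>R y)" using dle by (simp add: dist_norm zz_def algebra_simps)
    then have "norm zz ^2 \<le> norm (zz - t *\<^sub>R y)^2" using nz zz_def d0 by (simp add: power_mono)
    also have "\<dots> = norm zz^2 - 2*t*c + t*t*Y"
      by (simp add: power2_norm_eq_inner inner_diff_left inner_diff_right c_def Y_def inner_commute algebra_simps)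
    finally have "0 \<le> - 2*t*c + t*t*Y" by simp
    then have "0 \<le> (Y+1)^2 * (- 2*t*c + t*t*Y)" using Y0 by simp
    also have "(Y+1)^2 * (- 2*t*c + t*t*Y) = c^2 * (- Y - 2)"
    proof -
      have e: "(Y+1)*t = c" unfolding t_def using Y0 by simp
      have "(Y+1)^2 * (- 2*t*c + t*t*Y) = -2*((Y+1)*t)*c*(Y+1) + ((Y+1)*t)*((Y+1)*t)*Y"
        by (simp add: power2_eq_square algebra_simps)
      also have "\<dots> = c^2 * (- Y - 2)" unfolding e by (simp add: power2_eq_square algebra_simps)
      finally show ?thesis .
    qed
    finally have "c^2 * (Y+2) \<le> 0" by (simp add: algebra_simps)
    then have "c^2 \<le> 0" using Y0 by (auto simp: mult_le_0_iff)
    then show "inner (x - m0) y = 0" unfolding c_def zz_def by simp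
  qed
qed


lemma op_zero: "is_operator G \<Longrightarrow> (0,0) \<in> G" by (simp add: is_operator_def)
lemma op_add: "is_operator G \<Longrightarrow> (u,v)\<in>G \<Longrightarrow> (u',v')\<in>G \<Longrightarrow> (u+u', v+v') \<in> G"
  unfolding is_operator_def by fast
lemma op_scaleC: "is_operator G \<Longrightarrow> (u,v)\<in>G \<Longrightarrow> (scaleC c u, scaleC c v) \<in> G"
  unfolding is_operator_def by fast
lemma op_fun: "is_operator G \<Longrightarrow> (u,v)\<in>G \<Longrightarrow> (u,w)\<in>G \<Longrightarrow> v = w"
  unfolding is_operator_def by fast
lemma op_ii: "is_operator G \<Longrightarrow> (u,v)\<in>G \<Longrightarrow> (ii u, ii v) \<in> G"
  using op_scaleC[of G u v \<i>] by (simp add: scaleC_ii)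
lemma op_scaleR: "is_operator G \<Longrightarrow> (u,v)\<in>G \<Longrightarrow> (r *\<^sub>R u, r *\<^sub>R v) \<in> G"
  using op_scaleC[of G u v "complex_of_real r"] by (simp add: scaleC_def)
lemma op_neg: "is_operator G \<Longrightarrow> (u,v)\<in>G \<Longrightarrow> (- u, - v) \<in> G"
  using op_scaleR[of G u v "-1"] by simp
lemma op_diff: "is_operator G \<Longrightarrow> (u,v)\<in>G \<Longrightarrow> (u',v')\<in>G \<Longrightarrow> (u-u', v-v') \<in> G"
  using op_add[OF _ _ op_neg, of G u v u' v'] by simp

lemma adjoint_real:
  assumes "is_operator T"
  shows "(y,z) \<in> adjoint_op T \<longleftrightarrow> (\<forall>(x,w)\<in>T. inner w y = inner x z)"
proof
  assume "(y,z) \<in> adjoint_op T"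
  then show "\<forall>(x,w)\<in>T. inner w y = inner x z"
    by (auto simp: adjoint_op_def cinner_def)
next
  assume H: "\<forall>(x,w)\<in>T. inner w y = inner x z"
  have "cinner w y = cinner x z" if "(x,w)\<in>T" for x w
  proof -
    have "inner (ii w) y = inner (ii x) z" using H op_ii[OF assms that] by fast
    then have "inner w (ii y) = inner x (ii z)" by (simp add: inner_ii_left)
    moreover have "inner w y = inner x z" using H that by fast
    ultimately show ?thesis by (simp add: cinner_def)
  qed
  then show "(y,z) \<in> adjoint_op T" by (auto simp: adjoint_op_def)
qed

lemma adjointD: "is_operator T \<Longrightarrow> (y,z) \<in> adjoint_op T \<Longrightarrow> (x,w) \<in> T \<Longrightarrow> inner w y = inner x z"
  using adjoint_real by fast

lemma adjoint_is_operator: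
  assumes op: "is_operator T" and dd: "densely_defined T"
  shows "is_operator (adjoint_op T)"
proof -
  let ?A = "adjoint_op T"
  have add: "(y+y', z+z') \<in> ?A" if "(y,z)\<in>?A" "(y',z')\<in>?A" for y z y' z'
    using that unfolding adjoint_real[OF op] by (fastforce simp: inner_add_right)
  have sc: "(scaleC c y, scaleC c z) \<in> ?A" if "(y,z)\<in>?A" for y z c
  proof -
    have "inner w (scaleC c y) = inner x (scaleC c z)" if "(x,w)\<in>T" for x w
    proof -
      have 1: "inner w y = inner x z" using adjointD[OF op \<open>(y,z)\<in>?A\<close> that] .
      have "inner (ii w) y = inner (ii x) z" using adjointD[OF op \<open>(y,z)\<in>?A\<close> op_ii[OF op that]] .
      then have 2: "inner w (ii y) = inner x (ii z)" by (simp add: inner_ii_left)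
      show ?thesis using 1 2 by (simp add: scaleC_def inner_add_right)
    qed
    then show ?thesis unfolding adjoint_real[OF op] by auto
  qed
  have fn: "z = z'" if "(y,z)\<in>?A" "(y,z')\<in>?A" for y z z'
  proof -
    have d: "(0, z - z') \<in> ?A" using add[OF that(1) sc[OF that(2), of "-1"]]
      by (simp add: scaleC_def)
    have "Domain T \<subseteq> {x. inner x (z - z') = 0}"
    proof
      fix x assume "x \<in> Domain T"
      then obtain w where "(x,w)\<in>T" by auto
      from adjointD[OF op d this] show "x \<in> {x. inner x (z - z') = 0}" by simp
    qed
    moreover have "closed {x. inner x (z - z') = 0}"
      by (intro closed_Collect_eq continuous_intros)
    ultimately have "closure (Domain T) \<subseteq> {x. inner x (z - z') = 0}" by (rule closure_minimal)
    with dd have "UNIV \<subseteq> {x. inner x (z - z') = 0}" by (simp add: densely_defined_def)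
    then have "inner (z - z') (z - z') = 0" by blast
    then show ?thesis by simp
  qed
  have "(0,0) \<in> ?A" by (simp add: adjoint_real[OF op])
  then show ?thesis using add sc fn unfolding is_operator_def by blast
qed

lemma adjoint_closed:
  assumes op: "is_operator T"
  shows "closed (adjoint_op T)"
proof -
  have "adjoint_op T = (\<Inter>q\<in>T. {p. inner (snd q) (fst p) = inner (fst q) (snd p)})"
    by (rule set_eqI, case_tac x) (simp add: adjoint_real[OF op] split_beta)
  moreover have "closed {p. inner (snd q) (fst p) = inner (fst q) (snd p)}" for q :: "'a \<times> 'a"
    by (intro closed_Collect_eq continuous_intros)
  ultimately show ?thesis by auto
qed

lemma adjoint_antimono: "T \<subseteq> T' \<Longrightarrow> adjoint_op T' \<subseteq> adjoint_op T"
  unfolding adjoint_op_def by auto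

lemma sym_inner_ii:
  assumes op: "is_operator T" and sym: "T \<subseteq> adjoint_op T" and uv: "(u,v) \<in> T"
  shows "inner v (ii u) = 0"
proof -
  have "inner (ii v) u = inner (ii u) v" using adjointD[OF op _ op_ii[OF op uv]] sym uv by blast
  moreover have "inner u (ii v) = - inner v (ii u)" by (metis inner_ii_left inner_commute)
  ultimately show ?thesis by (simp add: inner_ii_left inner_commute)
qed

lemma sym_norm:
  assumes op: "is_operator T" and sym: "T \<subseteq> adjoint_op T" and uv: "(u,v) \<in> T" and s: "s * s = 1"
  shows "norm (v + s *\<^sub>R ii u)^2 = norm v^2 + norm u^2"
proof -
  have "norm (v + s *\<^sub>R ii u)^2 = norm v^2 + 2 * s * inner v (ii u) + s * s * norm (ii u)^2"
    by (simp add: power2_norm_eq_inner inner_add_left inner_add_right inner_commute algebra_simps inner_ii_ii)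
  then show ?thesis using sym_inner_ii[OF op sym uv] s by simp
qed

definition rs :: "('a::complex_hilbert \<times> 'a) set \<Rightarrow> real \<Rightarrow> 'a set" where
  "rs T s = (\<lambda>(u,v). v + s *\<^sub>R ii u) ` T"

lemma rs_closed:
  fixes T :: "('a::complex_hilbert \<times> 'a) set"
  assumes op: "is_operator T" and sym: "T \<subseteq> adjoint_op T" and cl: "closed T" and s: "s * s = 1"
  shows "closed (rs T s)"
proof (unfold closed_sequential_limits, intro allI impI, elim conjE)
  fix x l assume xin: "\<forall>n. x n \<in> rs T s" and lim: "x \<longlonglongrightarrow> l"
  have "\<forall>n. \<exists>q. q \<in> T \<and> x n = snd q + s *\<^sub>R ii (fst q)"
    using xin unfolding rs_def image_iff split_beta by blast
  from choice[OF this] obtain p where "\<forall>n. p n \<in> T \<and> x n = snd (p n) + s *\<^sub>R ii (fst (p n))" by blast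
  then have pT: "\<And>n. p n \<in> T" and px: "\<And>n. x n = snd (p n) + s *\<^sub>R ii (fst (p n))" by auto
  have nd: "norm (p m - p n) = norm (x m - x n)" for m n
  proof -
    have "(fst (p m) - fst (p n), snd (p m) - snd (p n)) \<in> T"
      using op_diff[OF op, of "fst (p m)" "snd (p m)" "fst (p n)" "snd (p n)"] pT by simp
    from sym_norm[OF op sym this s]
    have "norm (x m - x n)^2 = norm (snd (p m) - snd (p n))^2 + norm (fst (p m) - fst (p n))^2"
      by (simp add: px ii_diff algebra_simps)
    then have "norm (x m - x n) = sqrt (norm (fst (p m) - fst (p n))^2 + norm (snd (p m) - snd (p n))^2)"
      by (metis add.commute norm_ge_zero real_sqrt_unique)
    then show ?thesis by (simp add: norm_prod_def)
  qed
  have "Cauchy x" using lim by (rule LIMSEQ_imp_Cauchy)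
  then have "Cauchy p" unfolding Cauchy_def dist_norm nd .
  then obtain q where pq: "p \<longlonglongrightarrow> q" using Cauchy_convergent_iff convergent_def by blast
  have qT: "q \<in> T" using closed_sequentially[OF cl _ pq] pT by blast
  have "(\<lambda>n. snd (p n) + s *\<^sub>R ii (fst (p n))) \<longlonglongrightarrow> snd q + s *\<^sub>R ii (fst q)"
    by (intro tendsto_intros bounded_linear.tendsto[OF bl_ii] pq)
  moreover have "x = (\<lambda>n. snd (p n) + s *\<^sub>R ii (fst (p n)))" by (rule ext) (rule px)
  ultimately have "x \<longlonglongrightarrow> snd q + s *\<^sub>R ii (fst q)" by simp
  then have "l = snd q + s *\<^sub>R ii (fst q)" using lim LIMSEQ_unique by blast
  then show "l \<in> rs T s" using qT unfolding rs_def by (auto simp: image_iff split_beta intro!: bexI[of _ q])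
qed

lemma rs_mem: "(u,v) \<in> T \<Longrightarrow> v + s *\<^sub>R ii u \<in> rs T s"
  unfolding rs_def by force

lemma rs_memE: "r \<in> rs T s \<Longrightarrow> (\<And>u v. (u,v) \<in> T \<Longrightarrow> r = v + s *\<^sub>R ii u \<Longrightarrow> P) \<Longrightarrow> P"
  unfolding rs_def by auto

lemma rs_ii: "is_operator T \<Longrightarrow> r \<in> rs T s \<Longrightarrow> ii r \<in> rs T s"
  by (erule rs_memE, drule (1) op_ii) (auto simp: ii_add ii_scaleR intro!: rs_mem[where v="ii _"] elim!: ssubst)

lemma rs_perp: "(f, s *\<^sub>R ii f) \<in> adjoint_op T \<longleftrightarrow> (\<forall>r\<in>rs T s. inner r f = 0)" if op: "is_operator T"
proof -
  have "inner v f = inner u (s *\<^sub>R ii f) \<longleftrightarrow> inner (v + s *\<^sub>R ii u) f = 0" for u v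
    by (simp add: inner_add_left inner_ii_left)
  then show ?thesis unfolding adjoint_real[OF op] rs_def by auto
qed


lemma scaleC_minus_right: "scaleC c (- x) = - scaleC c (x::'a::complex_hilbert)"
  by (simp add: scaleC_def)

lemma orth_compl_ii:
  assumes "\<And>r. r \<in> M \<Longrightarrow> ii r \<in> M"
  shows "x \<in> orth_compl M \<longleftrightarrow> (\<forall>r\<in>M. inner r x = 0)"
proof -
  have "inner r (ii x) = 0" if "r \<in> M" "\<forall>r\<in>M. inner r x = 0" for r
  proof -
    have "inner (ii r) x = 0" using that assms[of r] by blast
    then show ?thesis using inner_ii_left[of r x] by simp
  qed
  then show ?thesis unfolding orth_compl_def cinner_zero_iff by blast
qed

lemma range_shift_i: "range_shift T \<i> = rs T (-1)"
  unfolding range_shift_def rs_def scaleC_ii by auto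
lemma range_shift_mi: "range_shift T (-\<i>) = rs T 1"
  unfolding range_shift_def rs_def scaleC_mii by auto

lemma defect_i: "is_operator T \<Longrightarrow> f \<in> defect T \<i> \<longleftrightarrow> (f, - ii f) \<in> adjoint_op T"
  using rs_perp[of T f "-1"] orth_compl_ii[of "rs T (-1)" f] rs_ii[of T _ "-1"]
  unfolding defect_def range_shift_i by simp
lemma defect_mi: "is_operator T \<Longrightarrow> f \<in> defect T (-\<i>) \<longleftrightarrow> (f, ii f) \<in> adjoint_op T"
  using rs_perp[of T f "1"] orth_compl_ii[of "rs T 1" f] rs_ii[of T _ "1"]
  unfolding defect_def range_shift_mi by simp

lemma sym_no_eigen:
  assumes op: "is_operator T" and sym: "T \<subseteq> adjoint_op T" and f: "(f, s *\<^sub>R ii f) \<in> T" and s: "s \<noteq> 0"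
  shows "f = 0"
proof -
  have "inner (s *\<^sub>R ii f) (ii f) = 0" using sym_inner_ii[OF op sym f] .
  then have "s * inner f f = 0" by (simp add: inner_ii_ii)
  then show ?thesis using s by simp
qed

lemma rs_subspace:
  assumes op: "is_operator T"
  shows "0 \<in> rs T s" "\<And>x y. x \<in> rs T s \<Longrightarrow> y \<in> rs T s \<Longrightarrow> x + y \<in> rs T s"
    "\<And>x r. x \<in> rs T s \<Longrightarrow> r *\<^sub>R x \<in> rs T s"
proof -
  show "0 \<in> rs T s" using rs_mem[OF op_zero[OF op], of s] by simp
  show "x + y \<in> rs T s" if xx: "x \<in> rs T s" and yy: "y \<in> rs T s" for x y
  proof -
    obtain u v where "(u,v)\<in>T" "x = v + s *\<^sub>R ii u" using rs_memE[OF xx] by metis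
    moreover obtain u' v' where "(u',v')\<in>T" "y = v' + s *\<^sub>R ii u'" using rs_memE[OF yy] by metis
    ultimately show ?thesis using rs_mem[OF op_add[OF op, of u v u' v'], of s]
      by (simp add: ii_add algebra_simps)
  qed
  show "r *\<^sub>R x \<in> rs T s" if xx: "x \<in> rs T s" for x r
  proof -
    obtain u v where "(u,v)\<in>T" "x = v + s *\<^sub>R ii u"
      using rs_memE[OF xx] by metis
    then show ?thesis using rs_mem[OF op_scaleR[OF op, of u v r], of s]
      by (simp add: ii_scaleR algebra_simps)
  qed
qed

lemma rs_decomp:
  fixes T :: "('a::complex_hilbert \<times> 'a) set"
  assumes op: "is_operator T" and sym: "T \<subseteq> adjoint_op T" and cl: "closed T" and s: "s * s = 1"
  shows "\<exists>m\<in>rs T s. (y - m, s *\<^sub>R ii (y - m)) \<in> adjoint_op T"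
proof -
  obtain m where "m \<in> rs T s" "\<forall>r\<in>rs T s. inner (y - m) r = 0"
    using projection_exists[OF rs_closed[OF op sym cl s] rs_subspace[OF op]] by blast
  then show ?thesis using rs_perp[OF op, of "y - m" s] by (auto simp: inner_commute)
qed

lemma rs_onto:
  fixes T :: "('a::complex_hilbert \<times> 'a) set"
  assumes op: "is_operator T" and sym: "T \<subseteq> adjoint_op T" and cl: "closed T" and s: "s * s = 1"
    and ne: "\<And>f. (f, s *\<^sub>R ii f) \<in> adjoint_op T \<Longrightarrow> f = 0"
  shows "y \<in> rs T s"
  using rs_decomp[OF op sym cl s, of y] ne by force

locale symop =
  fixes S :: "('a::complex_hilbert \<times> 'a) set"
  assumes op: "is_operator S" and cl: "closed S" and dd: "densely_defined S" and sym: "S \<subseteq> adjoint_op S"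
begin

abbreviation "Sa \<equiv> adjoint_op S"
abbreviation "Np \<equiv> defect S \<i>"
abbreviation "Nm \<equiv> defect S (-\<i>)"

lemma Sa_op: "is_operator Sa" using adjoint_is_operator[OF op dd] .

lemma Np_iff: "f \<in> Np \<longleftrightarrow> (f, - ii f) \<in> Sa" using defect_i[OF op] .
lemma Nm_iff: "f \<in> Nm \<longleftrightarrow> (f, ii f) \<in> Sa" using defect_mi[OF op] .

lemma Np_add: "f \<in> Np \<Longrightarrow> g \<in> Np \<Longrightarrow> f + g \<in> Np"
  unfolding Np_iff using op_add[OF Sa_op] by (fastforce simp: ii_add)
lemma Nm_add: "f \<in> Nm \<Longrightarrow> g \<in> Nm \<Longrightarrow> f + g \<in> Nm"
  unfolding Nm_iff using op_add[OF Sa_op] by (fastforce simp: ii_add)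
lemma Np_scaleC: "f \<in> Np \<Longrightarrow> scaleC c f \<in> Np"
  unfolding Np_iff using op_scaleC[OF Sa_op] by (fastforce simp: ii_scaleC scaleC_minus_right)
lemma Nm_scaleC: "f \<in> Nm \<Longrightarrow> scaleC c f \<in> Nm"
  unfolding Nm_iff using op_scaleC[OF Sa_op] by (fastforce simp: ii_scaleC)
lemma Np_ii: "f \<in> Np \<Longrightarrow> ii f \<in> Np" using Np_scaleC[of f \<i>] by (simp add: scaleC_ii)
lemma Nm_ii: "f \<in> Nm \<Longrightarrow> ii f \<in> Nm" using Nm_scaleC[of f \<i>] by (simp add: scaleC_ii)
lemma Np_scaleR: "f \<in> Np \<Longrightarrow> r *\<^sub>R f \<in> Np" using Np_scaleC[of f "complex_of_real r"] by (simp add: scaleC_def)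
lemma Nm_scaleR: "f \<in> Nm \<Longrightarrow> r *\<^sub>R f \<in> Nm" using Nm_scaleC[of f "complex_of_real r"] by (simp add: scaleC_def)
lemma Np_neg: "f \<in> Np \<Longrightarrow> - f \<in> Np" using Np_scaleR[of f "-1"] by simp
lemma Nm_neg: "f \<in> Nm \<Longrightarrow> - f \<in> Nm" using Nm_scaleR[of f "-1"] by simp
lemma Np_diff: "f \<in> Np \<Longrightarrow> g \<in> Np \<Longrightarrow> f - g \<in> Np" using Np_add[OF _ Np_neg] by simp
lemma Nm_diff: "f \<in> Nm \<Longrightarrow> g \<in> Nm \<Longrightarrow> f - g \<in> Nm" using Nm_add[OF _ Nm_neg] by simp
lemma Np_zero: "0 \<in> Np" using Np_scaleR[of _ 0] Np_iff op_zero[OF Sa_op] by auto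
lemma Nm_zero: "0 \<in> Nm" using Nm_scaleR[of _ 0] Nm_iff op_zero[OF Sa_op] by auto

lemma D_add: "u \<in> Domain S \<Longrightarrow> u' \<in> Domain S \<Longrightarrow> u + u' \<in> Domain S"
  using op_add[OF op] by blast
lemma D_scaleC: "u \<in> Domain S \<Longrightarrow> scaleC c u \<in> Domain S"
  using op_scaleC[OF op] by blast
lemma D_zero: "0 \<in> Domain S" using op_zero[OF op] by blast

lemma Np_perp: "(u,v) \<in> S \<Longrightarrow> f \<in> Np \<Longrightarrow> inner (v - ii u) f = 0"
  using rs_perp[OF op, of f "-1"] rs_mem[of u v S "-1"] Np_iff by auto
lemma Nm_perp: "(u,v) \<in> S \<Longrightarrow> f \<in> Nm \<Longrightarrow> inner (v + ii u) f = 0"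
  using rs_perp[OF op, of f "1"] rs_mem[of u v S "1"] Nm_iff by auto

lemma Sa_elem:
  assumes "(u,w) \<in> S" "fm \<in> Nm" "fp \<in> Np"
  shows "(u + fm + fp, w + ii fm - ii fp) \<in> Sa"
  using op_add[OF Sa_op op_add[OF Sa_op, of u w fm "ii fm"] , of fp "- ii fp"] assms sym Nm_iff Np_iff
  by auto

lemma vn_exists:
  assumes "\<psi> \<in> Domain Sa"
  shows "\<exists>u fm fp. u \<in> Domain S \<and> fm \<in> Nm \<and> fp \<in> Np \<and> \<psi> = u + fm + fp"
proof -
  obtain \<phi> where pp: "(\<psi>, \<phi>) \<in> Sa" using assms by auto
  have m1: "(-1::real) * (-1) = 1" by simp
  obtain r where r: "r \<in> rs S (-1)" and n: "(\<phi> - ii \<psi> - r, (-1) *\<^sub>R ii (\<phi> - ii \<psi> - r)) \<in> Sa"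
    using rs_decomp[OF op sym cl m1, of "\<phi> - ii \<psi>"] by blast
  obtain u v where uv: "(u,v) \<in> S" and rr: "r = v + (-1) *\<^sub>R ii u" using rs_memE[OF r] by metis
  define n where "n = \<phi> - ii \<psi> - r"
  have nNp: "n \<in> Np" using n unfolding Np_iff n_def by simp
  define fp where "fp = (1/2) *\<^sub>R ii n"
  have fpNp: "fp \<in> Np" unfolding fp_def by (intro Np_scaleR Np_ii nNp)
  define fm where "fm = \<psi> - u - fp"
  have "(\<psi> - u - fp, \<phi> - v - (- ii fp)) \<in> Sa"
    using op_diff[OF Sa_op op_diff[OF Sa_op pp, of u v], of fp "- ii fp"] sym uv fpNp Np_iff by auto
  moreover have "\<phi> - v - (- ii fp) = ii fm"
  proof -
    have "ii fp = - (1/2) *\<^sub>R n" unfolding fp_def by (simp add: ii_scaleR ii_ii)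
    then have h1: "2 *\<^sub>R ii fp = - n" by simp
    have "(\<phi> - v - (- ii fp)) - ii fm = (\<phi> - v - ii \<psi> + ii u) + 2 *\<^sub>R ii fp"
      unfolding fm_def by (simp add: ii_diff ii_add algebra_simps scaleR_2)
    also have "\<dots> = 0" unfolding h1 n_def rr by simp
    finally show ?thesis by simp
  qed
  ultimately have fmNm: "fm \<in> Nm" unfolding Nm_iff fm_def by simp
  have e: "\<psi> = u + fm + fp" unfolding fm_def by simp
  have uD: "u \<in> Domain S" using uv by blast
  show ?thesis
    by (rule exI[where x=u], rule exI[where x=fm], rule exI[where x=fp]) (intro conjI uD fmNm fpNp e)
qed

lemma orth_sum_zero: "a + b = 0 \<Longrightarrow> inner a b = 0 \<Longrightarrow> a = (0::'b::real_inner)"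
  by (metis add_eq_0_iff inner_minus_right inner_eq_zero_iff neg_equal_0_iff_equal)

lemma vn_zero:
  assumes u: "u \<in> Domain S" and fm: "fm \<in> Nm" and fp: "fp \<in> Np" and z: "u + fm + fp = 0"
  shows "u = 0 \<and> fm = 0 \<and> fp = 0"
proof -
  obtain w where uw: "(u,w) \<in> S" using u by auto
  have "(0, w + ii fm - ii fp) \<in> Sa" using Sa_elem[OF uw fm fp] z by simp
  moreover have "(0, 0) \<in> Sa" by (rule op_zero[OF Sa_op])
  ultimately have e: "w + ii fm - ii fp = 0" using op_fun[OF Sa_op] by blast
  have "(w - ii u) + (- 2 *\<^sub>R ii fp) = (w + ii fm - ii fp) - ii (u + fm + fp)"
    by (simp add: ii_add algebra_simps scaleR_2)
  then have s0: "(w - ii u) + (- 2 *\<^sub>R ii fp) = 0" using e z by simp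
  have "inner (w - ii u) (- 2 *\<^sub>R ii fp) = 0"
    using Np_perp[OF uw Np_scaleR[OF Np_ii[OF fp], of "-2"]] .
  then have a0: "w - ii u = 0" by (rule orth_sum_zero[OF s0])
  then have "ii fp = 0" using s0 by simp
  then have fp0: "fp = 0" by simp
  have "norm (w + (-1) *\<^sub>R ii u)^2 = norm w^2 + norm u^2" using sym_norm[OF op sym uw, of "-1"] by simp
  then have "u = 0" using a0 by (simp add: add_nonneg_eq_0_iff)
  then show ?thesis using fp0 z by simp
qed

lemma vn_parts_eq:
  assumes u: "u \<in> Domain S" and fm: "fm \<in> Nm" and fp: "fp \<in> Np" and psi: "\<psi> = u + fm + fp"
  shows "vn_parts S \<psi> = (u, fm, fp)"
  unfolding vn_parts_def
proof (rule the_equality)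
  show "case (u, fm, fp) of (u, fm, fp) \<Rightarrow> u \<in> Domain S \<and> fm \<in> Nm \<and> fp \<in> Np \<and> \<psi> = u + fm + fp"
    using assms by simp
next
  fix x assume "case x of (u, fm, fp) \<Rightarrow> u \<in> Domain S \<and> fm \<in> Nm \<and> fp \<in> Np \<and> \<psi> = u + fm + fp"
  then obtain u' fm' fp' where x: "x = (u', fm', fp')" and h: "u' \<in> Domain S" "fm' \<in> Nm" "fp' \<in> Np" "\<psi> = u' + fm' + fp'"
    by (cases x) auto
  have "u' - u \<in> Domain S" using D_add[OF h(1) D_scaleC[OF u, of "-1"]] by (simp add: scaleC_def)
  moreover have "(u' - u) + (fm' - fm) + (fp' - fp) = 0" using h(4) psi by (simp add: algebra_simps)
  ultimately have "u' - u = 0 \<and> fm' - fm = 0 \<and> fp' - fp = 0"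
    using vn_zero Nm_diff[OF h(2) fm] Np_diff[OF h(3) fp] by blast
  then show "x = (u, fm, fp)" using x by simp
qed

lemma Sa_value:
  assumes "(\<psi>, \<phi>) \<in> Sa" "(u,w) \<in> S" "fm \<in> Nm" "fp \<in> Np" "\<psi> = u + fm + fp"
  shows "\<phi> = w + ii fm - ii fp"
  using op_fun[OF Sa_op assms(1)] Sa_elem[OF assms(2-4)] assms(5) by simp

end

context symop begin
lemma green:
  assumes uw: "(u,w) \<in> S" and uw': "(u',w') \<in> S" and a: "a \<in> Nm" and a': "a' \<in> Nm" and b: "b \<in> Np" and b': "b' \<in> Np"
  shows "inner (w + ii a - ii b) (u' + a' + b') - inner (u + a + b) (w' + ii a' - ii b')
         = 2 * (inner (ii a) a' - inner (ii b) b')"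
proof -
  have a'S: "(a', ii a') \<in> Sa" using a' Nm_iff by blast
  have aS: "(a, ii a) \<in> Sa" using a Nm_iff by blast
  have b'S: "(b', - ii b') \<in> Sa" using b' Np_iff by blast
  have bS: "(b, - ii b) \<in> Sa" using b Np_iff by blast
  have u'S: "(u', w') \<in> Sa" using uw' sym by blast
  have f1: "inner w a' = inner u (ii a')" by (rule adjointD[OF op a'S uw])
  have f2: "inner w b' = - inner u (ii b')" using adjointD[OF op b'S uw] by simp
  have f3: "inner w u' = inner u w'" by (rule adjointD[OF op u'S uw])
  have f4: "inner w' a = inner u' (ii a)" by (rule adjointD[OF op aS uw'])
  have f5: "inner w' b = - inner u' (ii b)" using adjointD[OF op bS uw'] by simp
  have f4': "inner (ii a) u' = inner a w'" using f4 by (simp add: inner_commute)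
  have f5': "inner (ii b) u' = - inner b w'" using f5 by (simp add: inner_commute)
  have g1: "inner (ii a) b' = - inner a (ii b')" by (rule inner_ii_left)
  have g2: "inner (ii b) a' = - inner b (ii a')" by (rule inner_ii_left)
  have g3: "inner a (ii a') = - inner (ii a) a'" by (simp add: inner_ii_left)
  have g4: "inner b (ii b') = - inner (ii b) b'" by (simp add: inner_ii_left)
  have e: "inner (w + ii a - ii b) (u' + a' + b') - inner (u + a + b) (w' + ii a' - ii b') =
    (inner w u' + inner w a' + inner w b' + inner (ii a) u' + inner (ii a) a' + inner (ii a) b' - inner (ii b) u' - inner (ii b) a' - inner (ii b) b')
    - (inner u w' + inner u (ii a') - inner u (ii b') + inner a w' + inner a (ii a') - inner a (ii b') + inner b w' + inner b (ii a') - inner b (ii b'))"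
    by (simp only: inner_add_left inner_add_right inner_diff_left inner_diff_right)
  show ?thesis unfolding e f1 f2 f3 f4' f5' g1 g2 g3 g4 by (simp add: algebra_simps)
qed

end


lemma scaleC_one[simp]: "scaleC 1 x = (x::'a::complex_hilbert)" by (simp add: scaleC_def)
lemma scaleC_diff_right: "scaleC c (x - y) = scaleC c x - scaleC c (y::'a::complex_hilbert)"
  by (simp add: scaleC_def ii_diff algebra_simps)

locale fsym =
  fixes J :: "'a::complex_hilbert \<Rightarrow> 'a"
  assumes fs: "fundamental_symmetry J"
begin
lemma bl: "bounded_linear J" using fs by (simp add: fundamental_symmetry_def)
lemma J_add: "J (x + y) = J x + J y" using linear_add[OF bounded_linear.linear[OF bl]] .
lemma J_diff: "J (x - y) = J x - J y" using linear_diff[OF bounded_linear.linear[OF bl]] .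
lemma J_scaleR: "J (r *\<^sub>R x) = r *\<^sub>R J x" using linear_cmul[OF bounded_linear.linear[OF bl]] .
lemma J_zero[simp]: "J 0 = 0" using linear_0[OF bounded_linear.linear[OF bl]] .
lemma J_neg: "J (- x) = - J x" using linear_neg[OF bounded_linear.linear[OF bl]] .
lemma J_ii: "J (ii x) = ii (J x)" using fs by (simp add: fundamental_symmetry_def)
lemma J_scaleC: "J (scaleC c x) = scaleC c (J x)" by (simp add: scaleC_def J_add J_scaleR J_ii)
lemma J_cinner: "cinner (J x) y = cinner x (J y)" using fs by (simp add: fundamental_symmetry_def)
lemma J_J[simp]: "J (J x) = x" using fs by (simp add: fundamental_symmetry_def)

lemma commutes_adjoint:
  assumes "commutes_with J T"
  shows "commutes_with J (adjoint_op T)"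
  unfolding commutes_with_def
proof (clarify)
  fix y z assume yz: "(y,z) \<in> adjoint_op T"
  have "cinner w (J y) = cinner x (J z)" if "(x,w) \<in> T" for x w
  proof -
    have "(J x, J w) \<in> T" using assms that unfolding commutes_with_def by blast
    then have "cinner (J w) y = cinner (J x) z" using yz unfolding adjoint_op_def by blast
    then show ?thesis by (metis J_J J_cinner)
  qed
  then show "(J y, J z) \<in> adjoint_op T" unfolding adjoint_op_def by blast
qed
end

locale symopJ = symop S + fsym J for S J +
  assumes comm: "commutes_with J S"
begin
lemma comm_Sa: "commutes_with J Sa" by (rule commutes_adjoint[OF comm])
lemma J_Sa: "(x,z) \<in> Sa \<Longrightarrow> (J x, J z) \<in> Sa" using comm_Sa unfolding commutes_with_def by blast
lemma J_Np: "f \<in> Np \<Longrightarrow> J f \<in> Np" using J_Sa[of f "- ii f"] by (simp add: Np_iff J_neg J_ii)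
lemma J_Nm: "f \<in> Nm \<Longrightarrow> J f \<in> Nm" using J_Sa[of f "ii f"] by (simp add: Nm_iff J_ii)
lemma J_D: "u \<in> Domain S \<Longrightarrow> J u \<in> Domain S" using comm unfolding commutes_with_def by blast
end

context symop begin

lemma decomp:
  assumes "(x,z) \<in> Sa"
  obtains u w fm fp where "(u,w) \<in> S" "fm \<in> Nm" "fp \<in> Np" "x = u + fm + fp" "z = w + ii fm - ii fp"
proof -
  obtain u fm fp where h: "u \<in> Domain S" "fm \<in> Nm" "fp \<in> Np" "x = u + fm + fp"
    using vn_exists assms by blast
  then obtain w where uw: "(u,w) \<in> S" by blast
  show ?thesis using that[OF uw h(2,3,4) Sa_value[OF assms uw h(2,3,4)]] .
qed

lemma Gamma0_eq: "u \<in> Domain S \<Longrightarrow> fm \<in> Nm \<Longrightarrow> fp \<in> Np \<Longrightarrow> Gamma0 S Q (u + fm + fp) = fm + Q fp"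
  unfolding Gamma0_def using vn_parts_eq by simp
lemma Gamma1_eq: "u \<in> Domain S \<Longrightarrow> fm \<in> Nm \<Longrightarrow> fp \<in> Np \<Longrightarrow> Gamma1 S Q (u + fm + fp) = scaleC \<i> fm - scaleC \<i> (Q fp)"
  unfolding Gamma1_def using vn_parts_eq by simp

end

locale unitary = symop S for S +
  fixes Q :: "'a::complex_hilbert \<Rightarrow> 'a"
  assumes U: "unitary_between Q (defect S \<i>) (defect S (-\<i>))"
begin
lemma Q_img: "Q ` Np = Nm" using U by (simp add: unitary_between_def)
lemma Q_Nm: "f \<in> Np \<Longrightarrow> Q f \<in> Nm" using Q_img by blast
lemma Q_lin: "x \<in> Np \<Longrightarrow> y \<in> Np \<Longrightarrow> Q (scaleC a x + scaleC b y) = scaleC a (Q x) + scaleC b (Q y)"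
  using U by (simp add: unitary_between_def)
lemma Q_cinner: "x \<in> Np \<Longrightarrow> y \<in> Np \<Longrightarrow> cinner (Q x) (Q y) = cinner x y"
  using U by (simp add: unitary_between_def)
lemma Q_inner: "x \<in> Np \<Longrightarrow> y \<in> Np \<Longrightarrow> inner (Q x) (Q y) = inner x y"
  using Q_cinner[of x y] by (simp add: cinner_def complex_eq_iff)
lemma Q_add: "x \<in> Np \<Longrightarrow> y \<in> Np \<Longrightarrow> Q (x + y) = Q x + Q y"
  using Q_lin[of x y 1 1] by simp
lemma Q_scaleC: "x \<in> Np \<Longrightarrow> Q (scaleC a x) = scaleC a (Q x)"
  using Q_lin[of x x a 0] by simp
lemma Q_ii: "x \<in> Np \<Longrightarrow> Q (ii x) = ii (Q x)"
  using Q_scaleC[of x \<i>] by (simp add: scaleC_ii)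
lemma Q_zero: "Q 0 = 0"
  using Q_scaleC[OF Np_zero, of 0] by simp

definition "AQ = {(x,z). (x,z) \<in> Sa \<and> Gamma0 S Q x = 0}"

lemma AQ_elem:
  assumes "(u,w) \<in> S" "fp \<in> Np"
  shows "(u - Q fp + fp, w - ii (Q fp) - ii fp) \<in> AQ"
proof -
  have m: "- Q fp \<in> Nm" using Nm_neg[OF Q_Nm[OF assms(2)]] .
  have uD: "u \<in> Domain S" using assms(1) by blast
  have "(u + - Q fp + fp, w + ii (- Q fp) - ii fp) \<in> Sa" by (rule Sa_elem[OF assms(1) m assms(2)])
  moreover have "Gamma0 S Q (u + - Q fp + fp) = 0" using Gamma0_eq[OF uD m assms(2), where Q=Q] by simp
  ultimately show ?thesis unfolding AQ_def by simp
qed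

lemma AQ_decomp:
  assumes "(x,z) \<in> AQ"
  obtains u w fp where "(u,w) \<in> S" "fp \<in> Np" "x = u - Q fp + fp" "z = w - ii (Q fp) - ii fp"
proof -
  have xz: "(x,z) \<in> Sa" and g: "Gamma0 S Q x = 0" using assms unfolding AQ_def by auto
  obtain u w fm fp where h: "(u,w) \<in> S" "fm \<in> Nm" "fp \<in> Np" "x = u + fm + fp" "z = w + ii fm - ii fp"
    using decomp[OF xz] by blast
  have "fm + Q fp = 0" using g Gamma0_eq[OF _ h(2,3), of u Q] h(1,4) by auto
  then have "fm = - Q fp" by (simp add: eq_neg_iff_add_eq_0)
  then show ?thesis using that[OF h(1,3)] h(4,5) by simp
qed

lemma S_AQ: "S \<subseteq> AQ"
proof
  fix p assume "p \<in> S"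
  then obtain u w where p: "p = (u,w)" "(u,w) \<in> S" by (cases p) auto
  show "p \<in> AQ" using AQ_elem[OF p(2) Np_zero] p by (simp add: Q_zero)
qed

lemma AQ_op: "is_operator AQ"
proof -
  have z: "(0,0) \<in> AQ" using S_AQ op_zero[OF op] by blast
  have add: "(x+x', z+z') \<in> AQ" if h1: "(x,z) \<in> AQ" and h2: "(x',z') \<in> AQ" for x z x' z'
  proof -
    obtain u w fp where a: "(u,w) \<in> S" "fp \<in> Np" "x = u - Q fp + fp" "z = w - ii (Q fp) - ii fp"
      using AQ_decomp[OF h1] by blast
    obtain u' w' fp' where b: "(u',w') \<in> S" "fp' \<in> Np" "x' = u' - Q fp' + fp'" "z' = w' - ii (Q fp') - ii fp'"
      using AQ_decomp[OF h2] by blast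
    have "(u + u' - Q (fp + fp') + (fp + fp'), (w + w') - ii (Q (fp + fp')) - ii (fp + fp')) \<in> AQ"
      by (rule AQ_elem[OF op_add[OF op a(1) b(1)] Np_add[OF a(2) b(2)]])
    moreover have "x + x' = u + u' - Q (fp + fp') + (fp + fp')" using a b by (simp add: Q_add)
    moreover have "z + z' = (w + w') - ii (Q (fp + fp')) - ii (fp + fp')" using a b by (simp add: Q_add ii_add)
    ultimately show ?thesis by simp
  qed
  have sc: "(scaleC c x, scaleC c z) \<in> AQ" if h1: "(x,z) \<in> AQ" for x z c
  proof -
    obtain u w fp where a: "(u,w) \<in> S" "fp \<in> Np" "x = u - Q fp + fp" "z = w - ii (Q fp) - ii fp"
      using AQ_decomp[OF h1] by blast
    have "(scaleC c u - Q (scaleC c fp) + scaleC c fp, scaleC c w - ii (Q (scaleC c fp)) - ii (scaleC c fp)) \<in> AQ"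
      by (rule AQ_elem[OF op_scaleC[OF op a(1)] Np_scaleC[OF a(2)]])
    moreover have "scaleC c x = scaleC c u - Q (scaleC c fp) + scaleC c fp" using a by (simp add: Q_scaleC[OF a(2)] scaleC_add_right scaleC_diff_right)
    moreover have "scaleC c z = scaleC c w - ii (Q (scaleC c fp)) - ii (scaleC c fp)" using a by (simp add: Q_scaleC[OF a(2)] ii_scaleC scaleC_diff_right)
    ultimately show ?thesis by simp
  qed
  have fn: "z = z'" if "(x,z) \<in> AQ" "(x,z') \<in> AQ" for x z z'
    using that op_fun[OF Sa_op] unfolding AQ_def by blast
  show ?thesis unfolding is_operator_def using z add sc fn by blast
qed

lemma AQ_Sa: "AQ \<subseteq> Sa" unfolding AQ_def by auto

lemma AQ_green:
  assumes "(x,z) \<in> AQ" "(y,y') \<in> AQ"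
  shows "inner y' x = inner y z"
proof -
  obtain u w fp where a: "(u,w) \<in> S" "fp \<in> Np" "x = u - Q fp + fp" "z = w - ii (Q fp) - ii fp"
    using AQ_decomp[OF assms(1)] by blast
  obtain u' w' fp' where b: "(u',w') \<in> S" "fp' \<in> Np" "y = u' - Q fp' + fp'" "y' = w' - ii (Q fp') - ii fp'"
    using AQ_decomp[OF assms(2)] by blast
  have g: "inner (w' + ii (- Q fp') - ii fp') (u + - Q fp + fp) - inner (u' + - Q fp' + fp') (w + ii (- Q fp) - ii fp)
      = 2 * (inner (ii (- Q fp')) (- Q fp) - inner (ii fp') fp)"
    by (rule green[OF b(1) a(1) Nm_neg[OF Q_Nm[OF b(2)]] Nm_neg[OF Q_Nm[OF a(2)]] b(2) a(2)])
  have "inner (ii (- Q fp')) (- Q fp) = inner (Q (ii fp')) (Q fp)" by (simp add: Q_ii[OF b(2)])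
  also have "\<dots> = inner (ii fp') fp" by (rule Q_inner[OF Np_ii[OF b(2)] a(2)])
  finally have "inner y' x - inner y z = 0" using g a b by simp
  then show ?thesis by simp
qed

lemma AQ_sa: "self_adjoint_op AQ"
proof -
  have dd': "densely_defined AQ"
  proof -
    have "Domain S \<subseteq> Domain AQ" using S_AQ by auto
    then have "closure (Domain S) \<subseteq> closure (Domain AQ)" by (rule closure_mono)
    then show ?thesis using dd unfolding densely_defined_def by auto
  qed
  have sub1: "AQ \<subseteq> adjoint_op AQ"
  proof
    fix p assume "p \<in> AQ"
    then obtain x z where p: "p = (x,z)" "(x,z) \<in> AQ" by (cases p) auto
    have "\<forall>(y,y')\<in>AQ. inner y' x = inner y z" using AQ_green[OF p(2)] by blast
    then show "p \<in> adjoint_op AQ" using p adjoint_real[OF AQ_op] by simp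
  qed
  have sub2: "adjoint_op AQ \<subseteq> AQ"
  proof
    fix p assume "p \<in> adjoint_op AQ"
    then obtain y z where p: "p = (y,z)" "(y,z) \<in> adjoint_op AQ" by (cases p) auto
    have yz: "(y,z) \<in> Sa" using adjoint_antimono[OF S_AQ] p(2) by blast
    obtain u' w' fm' fp' where b: "(u',w') \<in> S" "fm' \<in> Nm" "fp' \<in> Np" "y = u' + fm' + fp'" "z = w' + ii fm' - ii fp'"
      using decomp[OF yz] by blast
    have orth: "inner (ii (Q fp)) (fm' + Q fp') = 0" if fp: "fp \<in> Np" for fp
    proof -
      have "(0 - Q fp + fp, 0 - ii (Q fp) - ii fp) \<in> AQ" by (rule AQ_elem[OF op_zero[OF op] fp])
      then have e: "inner (0 - ii (Q fp) - ii fp) y = inner (0 - Q fp + fp) z"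
        using p(2) adjoint_real[OF AQ_op] by fast
      have g: "inner (0 + ii (- Q fp) - ii fp) (u' + fm' + fp') - inner (0 + - Q fp + fp) (w' + ii fm' - ii fp')
        = 2 * (inner (ii (- Q fp)) fm' - inner (ii fp) fp')"
        by (rule green[OF op_zero[OF op] b(1) Nm_neg[OF Q_Nm[OF fp]] b(2) fp b(3)])
      have "inner (ii fp) fp' = inner (Q (ii fp)) (Q fp')" by (rule Q_inner[OF Np_ii[OF fp] b(3), symmetric])
      also have "\<dots> = inner (ii (Q fp)) (Q fp')" by (simp add: Q_ii[OF fp])
      finally have "inner (ii (- Q fp)) fm' - inner (ii (Q fp)) (Q fp') = 0"
        using e g b(4,5) by simp
      then show ?thesis by (simp add: inner_add_right)
    qed
    have m: "fm' + Q fp' \<in> Nm" using Nm_add[OF b(2) Q_Nm[OF b(3)]] .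
    then obtain h where h: "h \<in> Np" "Q h = fm' + Q fp'" using Q_img by (metis imageE)
    have "- ii h \<in> Np" using Np_neg[OF Np_ii[OF h(1)]] .
    from orth[OF this] have "inner (ii (Q (- ii h))) (fm' + Q fp') = 0" .
    moreover have "ii (Q (- ii h)) = Q h"
    proof -
      have "Q (- ii h) = - Q (ii h)" using Q_scaleC[OF Np_ii[OF h(1)], of "-1"] by (simp add: scaleC_def)
      then show ?thesis by (simp add: Q_ii[OF h(1)] ii_ii)
    qed
    ultimately have "inner (fm' + Q fp') (fm' + Q fp') = 0" using h(2) by simp
    then have "fm' + Q fp' = 0" by simp
    moreover have "Gamma0 S Q y = fm' + Q fp'" using Gamma0_eq[OF _ b(2,3)] b(1,4) by blast
    ultimately show "p \<in> AQ" using p yz unfolding AQ_def by simp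
  qed
  show ?thesis unfolding self_adjoint_op_def using AQ_op dd' sub1 sub2 by blast
qed
end


locale saext = symop S for S +
  fixes A assumes sa: "self_adjoint_op A" and SA: "S \<subseteq> A"
begin
lemma A_op: "is_operator A" using sa by (simp add: self_adjoint_op_def)
lemma A_eq: "A = adjoint_op A" using sa by (simp add: self_adjoint_op_def)
lemma A_Sa: "A \<subseteq> Sa" using adjoint_antimono[OF SA] A_eq by simp
lemma A_sym: "A \<subseteq> adjoint_op A" using A_eq by simp
lemma A_cl: "closed A" using adjoint_closed[OF A_op] A_eq by simp
lemma A_ne: "(f, s *\<^sub>R ii f) \<in> adjoint_op A \<Longrightarrow> s \<noteq> 0 \<Longrightarrow> f = 0"
  using sym_no_eigen[OF A_op A_sym] A_eq by simp
lemma onto_m: "y \<in> rs A (-1)"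
proof (rule rs_onto[OF A_op A_sym A_cl])
  show "(-1::real) * -1 = 1" by simp
  fix f assume "(f, (-1) *\<^sub>R ii f) \<in> adjoint_op A" then show "f = 0" by (rule A_ne) simp
qed
lemma onto_p: "y \<in> rs A 1"
proof (rule rs_onto[OF A_op A_sym A_cl])
  show "(1::real) * 1 = 1" by simp
  fix f assume "(f, 1 *\<^sub>R ii f) \<in> adjoint_op A" then show "f = 0" by (rule A_ne) simp
qed

lemma DA_add: "x \<in> Domain A \<Longrightarrow> y \<in> Domain A \<Longrightarrow> x + y \<in> Domain A"
  using op_add[OF A_op] by blast
lemma DA_scaleC: "x \<in> Domain A \<Longrightarrow> scaleC c x \<in> Domain A"
  using op_scaleC[OF A_op] by blast
lemma DA_diff: "x \<in> Domain A \<Longrightarrow> y \<in> Domain A \<Longrightarrow> x - y \<in> Domain A"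
  using op_diff[OF A_op] by blast

lemma ex_m:
  assumes fp: "fp \<in> Np"
  shows "\<exists>g\<in>Nm. g + fp \<in> Domain A"
proof -
  obtain x w where xw: "(x,w) \<in> A" and e: "- 2 *\<^sub>R ii fp = w + (-1) *\<^sub>R ii x"
    using rs_memE[OF onto_m[of "- 2 *\<^sub>R ii fp"]] by metis
  have "(x,w) \<in> Sa" using xw A_Sa by blast
  then obtain u w0 gm gp where d: "(u,w0) \<in> S" "gm \<in> Nm" "gp \<in> Np" "x = u + gm + gp" "w = w0 + ii gm - ii gp"
    by (rule decomp)
  have s0: "(w0 - ii u) + 2 *\<^sub>R ii (fp - gp) = 0"
  proof -
    have "(w0 - ii u) + 2 *\<^sub>R ii (fp - gp) = (w + (-1) *\<^sub>R ii x) + 2 *\<^sub>R ii fp"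
      using d by (simp add: ii_add ii_diff algebra_simps scaleR_2)
    also have "\<dots> = 0" using e[symmetric] by simp
    finally show ?thesis .
  qed
  have "inner (w0 - ii u) (2 *\<^sub>R ii (fp - gp)) = 0"
    by (rule Np_perp[OF d(1) Np_scaleR[OF Np_ii[OF Np_diff[OF fp d(3)]]]])
  then have a0: "w0 - ii u = 0" by (rule orth_sum_zero[OF s0])
  then have "ii (fp - gp) = 0" using s0 by simp
  then have gp: "gp = fp" by simp
  have "norm (w0 + (-1) *\<^sub>R ii u)^2 = norm w0^2 + norm u^2" using sym_norm[OF op sym d(1), of "-1"] by simp
  then have "u = 0" using a0 by (simp add: add_nonneg_eq_0_iff)
  then have "x = gm + fp" using d(4) gp by simp
  then show ?thesis using xw d(2) by blast
qed

lemma ex_p: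
  assumes g: "g \<in> Nm"
  shows "\<exists>f\<in>Np. g + f \<in> Domain A"
proof -
  obtain x w where xw: "(x,w) \<in> A" and e: "2 *\<^sub>R ii g = w + 1 *\<^sub>R ii x"
    using rs_memE[OF onto_p[of "2 *\<^sub>R ii g"]] by metis
  have "(x,w) \<in> Sa" using xw A_Sa by blast
  then obtain u w0 gm gp where d: "(u,w0) \<in> S" "gm \<in> Nm" "gp \<in> Np" "x = u + gm + gp" "w = w0 + ii gm - ii gp"
    by (rule decomp)
  have s0: "(w0 + ii u) + 2 *\<^sub>R ii (gm - g) = 0"
  proof -
    have "(w0 + ii u) + 2 *\<^sub>R ii (gm - g) = (w + 1 *\<^sub>R ii x) - 2 *\<^sub>R ii g"
      using d by (simp add: ii_add ii_diff algebra_simps scaleR_2)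
    also have "\<dots> = 0" using e[symmetric] by simp
    finally show ?thesis .
  qed
  have "inner (w0 + ii u) (2 *\<^sub>R ii (gm - g)) = 0"
    by (rule Nm_perp[OF d(1) Nm_scaleR[OF Nm_ii[OF Nm_diff[OF d(2) g]]]])
  then have a0: "w0 + ii u = 0" by (rule orth_sum_zero[OF s0])
  then have "ii (gm - g) = 0" using s0 by simp
  then have gm: "gm = g" by simp
  have "norm (w0 + 1 *\<^sub>R ii u)^2 = norm w0^2 + norm u^2" using sym_norm[OF op sym d(1), of "1"] by simp
  then have "u = 0" using a0 by (simp add: add_nonneg_eq_0_iff)
  then have "x = g + gp" using d(4) gm by simp
  then show ?thesis using xw d(3) by blast
qed

lemma uniq:
  assumes g: "g \<in> Nm" and g': "g' \<in> Nm" and a: "f - g \<in> Domain A" and b: "f - g' \<in> Domain A"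
  shows "g = g'"
proof -
  have dA: "g' - g \<in> Domain A" using DA_diff[OF a b] by simp
  then obtain z where dz: "(g' - g, z) \<in> A" by blast
  have "(g' - g, ii (g' - g)) \<in> Sa" using Nm_diff[OF g' g] Nm_iff by blast
  moreover have "(g' - g, z) \<in> Sa" using dz A_Sa by blast
  ultimately have "z = ii (g' - g)" using op_fun[OF Sa_op] by blast
  then have "(g' - g, 1 *\<^sub>R ii (g' - g)) \<in> A" using dz by simp
  then have "g' - g = 0" by (rule sym_no_eigen[OF A_op A_sym]) simp
  then show ?thesis by simp
qed

definition "QA f = (THE g. g \<in> Nm \<and> f - g \<in> Domain A)"

lemma QA_prop:
  assumes fp: "f \<in> Np"
  shows "QA f \<in> Nm \<and> f - QA f \<in> Domain A"
proof -
  obtain g where g: "g \<in> Nm" "g + f \<in> Domain A" using ex_m[OF fp] by blast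
  have P: "- g \<in> Nm \<and> f - (- g) \<in> Domain A" using Nm_neg[OF g(1)] g(2) by (simp add: add.commute)
  show ?thesis unfolding QA_def
    by (rule theI[of "\<lambda>g. g \<in> Nm \<and> f - g \<in> Domain A" "- g", OF P]) (use uniq P in blast)
qed

lemma QA_unique: "f \<in> Np \<Longrightarrow> g \<in> Nm \<Longrightarrow> f - g \<in> Domain A \<Longrightarrow> QA f = g"
  using QA_prop uniq by blast

lemma QA_lin:
  assumes x: "x \<in> Np" and y: "y \<in> Np"
  shows "QA (scaleC a x + scaleC b y) = scaleC a (QA x) + scaleC b (QA y)"
proof (rule QA_unique)
  show "scaleC a x + scaleC b y \<in> Np" by (intro Np_add Np_scaleC x y)
  show "scaleC a (QA x) + scaleC b (QA y) \<in> Nm" using QA_prop[OF x] QA_prop[OF y] by (intro Nm_add Nm_scaleC) auto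
  have "scaleC a (x - QA x) + scaleC b (y - QA y) \<in> Domain A"
    using QA_prop[OF x] QA_prop[OF y] by (intro DA_add DA_scaleC) auto
  then show "scaleC a x + scaleC b y - (scaleC a (QA x) + scaleC b (QA y)) \<in> Domain A"
    by (simp add: scaleC_diff_right algebra_simps)
qed

lemma QA_add: "x \<in> Np \<Longrightarrow> y \<in> Np \<Longrightarrow> QA (x + y) = QA x + QA y"
  using QA_lin[of x y 1 1] by simp
lemma QA_diff: "x \<in> Np \<Longrightarrow> y \<in> Np \<Longrightarrow> QA (x - y) = QA x - QA y"
  using QA_lin[of x y 1 "-1"] by (simp add: scaleC_def)
lemma QA_ii: "x \<in> Np \<Longrightarrow> QA (ii x) = ii (QA x)"
  using QA_lin[of x x "\<i>" 0] by (simp add: scaleC_ii)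

lemma QA_norm:
  assumes f: "f \<in> Np"
  shows "norm (QA f)^2 = norm f^2"
proof -
  define q where "q = QA f"
  have q: "q \<in> Nm" "f - q \<in> Domain A" using QA_prop[OF f] q_def by auto
  then obtain z where xz: "(f - q, z) \<in> A" by blast
  have "(f - q, z) \<in> Sa" using xz A_Sa by blast
  then have "z = 0 + ii (- q) - ii f"
    using Sa_value[OF _ op_zero[OF op] Nm_neg[OF q(1)] f] by simp
  moreover have "inner z (ii (f - q)) = 0" using sym_inner_ii[OF A_op A_sym xz] .
  ultimately have "inner (- ii q - ii f) (ii f - ii q) = 0" by (simp add: ii_diff)
  then have "inner (ii q) (ii q) - inner (ii f) (ii f) = 0"
    by (simp add: inner_diff_right inner_diff_left inner_commute algebra_simps)
  then show ?thesis unfolding q_def by (simp add: inner_ii_ii power2_norm_eq_inner)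
qed

lemma QA_inner:
  assumes x: "x \<in> Np" and y: "y \<in> Np"
  shows "inner (QA x) (QA y) = inner x y"
proof -
  have pol: "inner a b = (norm (a + b)^2 - norm (a - b)^2) / 4" for a b :: 'a
    by (simp add: power2_norm_eq_inner inner_add_left inner_add_right inner_diff_left inner_diff_right inner_commute algebra_simps)
  have "inner (QA x) (QA y) = (norm (QA (x + y))^2 - norm (QA (x - y))^2) / 4"
    by (simp add: pol QA_add[OF x y] QA_diff[OF x y])
  also have "\<dots> = (norm (x + y)^2 - norm (x - y)^2) / 4"
    using QA_norm[OF Np_add[OF x y]] QA_norm[OF Np_diff[OF x y]] by simp
  also have "\<dots> = inner x y" by (simp add: pol)
  finally show ?thesis .
qed

lemma QA_unitary: "unitary_between QA Np Nm"
proof -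
  have img: "QA ` Np = Nm"
  proof
    show "QA ` Np \<subseteq> Nm" using QA_prop by blast
    show "Nm \<subseteq> QA ` Np"
    proof
      fix g assume g: "g \<in> Nm"
      obtain f where f: "f \<in> Np" "- g + f \<in> Domain A" using ex_p[OF Nm_neg[OF g]] by blast
      have "QA f = g" by (rule QA_unique[OF f(1) g]) (use f(2) in \<open>simp add: add.commute\<close>)
      then show "g \<in> QA ` Np" using f(1) by blast
    qed
  qed
  have ci: "cinner (QA x) (QA y) = cinner x y" if x: "x \<in> Np" and y: "y \<in> Np" for x y
  proof -
    have "inner (QA x) (ii (QA y)) = inner (QA x) (QA (ii y))" by (simp add: QA_ii[OF y])
    also have "\<dots> = inner x (ii y)" by (rule QA_inner[OF x Np_ii[OF y]])
    finally show ?thesis using QA_inner[OF x y] by (simp add: cinner_def)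
  qed
  show ?thesis unfolding unitary_between_def using img QA_lin ci by blast
qed
end

locale saextJ = saext S A + symopJ S J for S A J +
  assumes commA: "commutes_with J A"
begin
lemma J_DA: "x \<in> Domain A \<Longrightarrow> J x \<in> Domain A" using commA unfolding commutes_with_def by blast

lemma QA_J:
  assumes f: "f \<in> Np" shows "QA (J f) = J (QA f)"
proof (rule QA_unique)
  show "J f \<in> Np" using J_Np[OF f] .
  show "J (QA f) \<in> Nm" using J_Nm QA_prop[OF f] by blast
  have "J (f - QA f) \<in> Domain A" using J_DA QA_prop[OF f] by blast
  then show "J f - J (QA f) \<in> Domain A" by (simp add: J_diff)
qed

lemma Gamma_comm:
  assumes "\<psi> \<in> Domain Sa"
  shows "Gamma0 S QA (J \<psi>) = J (Gamma0 S QA \<psi>) \<and> Gamma1 S QA (J \<psi>) = J (Gamma1 S QA \<psi>)"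
proof -
  obtain u fm fp where h: "u \<in> Domain S" "fm \<in> Nm" "fp \<in> Np" "\<psi> = u + fm + fp"
    using vn_exists[OF assms] by blast
  have Jd: "J \<psi> = J u + J fm + J fp" using h(4) by (simp add: J_add)
  have a1: "Gamma0 S QA (J u + J fm + J fp) = J fm + QA (J fp)"
    by (rule Gamma0_eq[OF J_D[OF h(1)] J_Nm[OF h(2)] J_Np[OF h(3)]])
  have a2: "Gamma0 S QA (u + fm + fp) = fm + QA fp" by (rule Gamma0_eq[OF h(1-3)])
  have a3: "Gamma1 S QA (J u + J fm + J fp) = scaleC \<i> (J fm) - scaleC \<i> (QA (J fp))"
    by (rule Gamma1_eq[OF J_D[OF h(1)] J_Nm[OF h(2)] J_Np[OF h(3)]])
  have a4: "Gamma1 S QA (u + fm + fp) = scaleC \<i> fm - scaleC \<i> (QA fp)" by (rule Gamma1_eq[OF h(1-3)])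
  show ?thesis
    unfolding h(4) a2 a4 by (simp add: a1 a3 QA_J[OF h(3)] J_add J_diff J_scaleC)
qed
end



theorem proposition2p3:
  fixes S :: "('a::complex_hilbert \<times> 'a) set" and J :: "'a \<Rightarrow> 'a"
  assumes "is_operator S" and "closed S" and "densely_defined S" and "symmetric_op S"
    and "equal_hilbert_dim (defect S \<i>) (defect S (- \<i>))"
    and "fundamental_symmetry J" and "commutes_with J S"
  shows "(\<exists>Q. unitary_between Q (defect S \<i>) (defect S (- \<i>))
            \<and> (\<forall>\<psi>\<in>Domain (adjoint_op S).
                 Gamma0 S Q (J \<psi>) = J (Gamma0 S Q \<psi>) \<and> Gamma1 S Q (J \<psi>) = J (Gamma1 S Q \<psi>)))
         \<longleftrightarrow> (\<exists>A. self_adjoint_op A \<and> S \<subseteq> A \<and> commutes_with J A)"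
proof -
  have sym: "S \<subseteq> adjoint_op S" using assms(4) by (simp add: symmetric_op_def)
  interpret symopJ S J
    by unfold_locales (use assms(1,2,3,6,7) sym in auto)
  show ?thesis
  proof
    assume "\<exists>Q. unitary_between Q (defect S \<i>) (defect S (- \<i>))
            \<and> (\<forall>\<psi>\<in>Domain (adjoint_op S).
                 Gamma0 S Q (J \<psi>) = J (Gamma0 S Q \<psi>) \<and> Gamma1 S Q (J \<psi>) = J (Gamma1 S Q \<psi>))"
    then obtain Q where U: "unitary_between Q (defect S \<i>) (defect S (- \<i>))"
      and Gm: "\<forall>\<psi>\<in>Domain (adjoint_op S). Gamma0 S Q (J \<psi>) = J (Gamma0 S Q \<psi>)" by blast
    interpret unitary S Q by unfold_locales (use U in auto)
    have c: "commutes_with J AQ" unfolding commutes_with_def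
    proof clarify
      fix x z assume xz: "(x,z) \<in> AQ"
      have xs: "(x,z) \<in> Sa" and g0: "Gamma0 S Q x = 0" using xz unfolding AQ_def by auto
      have "(J x, J z) \<in> Sa" using J_Sa[OF xs] .
      moreover have "Gamma0 S Q (J x) = 0" using Gm xs g0 by (metis Domain.DomainI J_zero)
      ultimately show "(J x, J z) \<in> AQ" unfolding AQ_def by simp
    qed
    show "\<exists>A. self_adjoint_op A \<and> S \<subseteq> A \<and> commutes_with J A"
      using AQ_sa S_AQ c by blast
  next
    assume "\<exists>A. self_adjoint_op A \<and> S \<subseteq> A \<and> commutes_with J A"
    then obtain A where A: "self_adjoint_op A" "S \<subseteq> A" "commutes_with J A" by blast
    interpret saextJ S A J by unfold_locales (use A in auto)
    show "\<exists>Q. unitary_between Q (defect S \<i>) (defect S (- \<i>))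
            \<and> (\<forall>\<psi>\<in>Domain (adjoint_op S).
                 Gamma0 S Q (J \<psi>) = J (Gamma0 S Q \<psi>) \<and> Gamma1 S Q (J \<psi>) = J (Gamma1 S Q \<psi>))"
      using QA_unitary Gamma_comm by blast
  qed
qed


end
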